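(* $z_2(5,3)\ge 9$.
   Context: Double Zarankiewicz number: consider configurations $G=([m],[n],E_1\cup E_2)$ where $[m]=\{1,\dots,m\}$, $E_1\subseteq[m]\times[n]$ is a set of 1-edges (cells) and $E_2$ is a set of 2-edges $(i,j;k,l)$ with $i,k\in[m]$, $j,l\in[n]$, $i\ne k$, $j\ne l$; the cells $(i,j)$ and $(k,l)$ are the two halves of this 2-edge. Simplicity condition: the halves of all 2-edges are pairwise distinct cells and none of them belongs to $E_1$. A cell is occupied if it lies in $E_1$ or is a half of some 2-edge. $G$ contains a generalized $C_4$-cycle if (1) there are four 1-edges $(i,j),(i,l),(k,j),(k,l)\in E_1$ with $i\ne k$, $j\ne l$; or (2) there is a 2-edge $(i,j;k,l)\in E_2$ whose two opposite cells $(i,l)$ and $(k,j)$ are both occupied; or (3) there are a 2-edge $(i,j;p,q)\in E_2$ and a cell $(k,l)$ such that the five cells $(k,l),(k,j),(k,q),(i,l),(p,l)$ are pairwise distinct and all occupied. $z_2(m,n)$ is the maximum of $|E_1|+|E_2|$ over all such $G$ satisfying the simplicity condition and containing no generalized $C_4$-cycle. *)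

theory Defs
  imports Main
begin

type_synonym cell = "nat \<times> nat"
type_synonym edge2 = "cell \<times> cell"

text \<open>A 2-edge (i,j;k,l) is represented as the pair ((i,j),(k,l)); its halves are the two cells.\<close>
definition halves :: "edge2 \<Rightarrow> cell set" where
  "halves e = {fst e, snd e}"

definition occupied :: "cell set \<Rightarrow> edge2 set \<Rightarrow> cell \<Rightarrow> bool" where
  "occupied E1 E2 c \<longleftrightarrow> c \<in> E1 \<or> (\<exists>e\<in>E2. c \<in> halves e)"

definition is_config :: "nat \<Rightarrow> nat \<Rightarrow> cell set \<Rightarrow> edge2 set \<Rightarrow> bool" where
  "is_config m n E1 E2 \<longleftrightarrow>
     E1 \<subseteq> {1..m} \<times> {1..n} \<and>
     (\<forall>((i,j),(k,l))\<in>E2. i \<in> {1..m} \<and> k \<in> {1..m} \<and> j \<in> {1..n} \<and> l \<in> {1..n}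
                          \<and> i \<noteq> k \<and> j \<noteq> l)"

definition simple_config :: "cell set \<Rightarrow> edge2 set \<Rightarrow> bool" where
  "simple_config E1 E2 \<longleftrightarrow>
     (\<forall>e\<in>E2. \<forall>e'\<in>E2. e \<noteq> e' \<longrightarrow> halves e \<inter> halves e' = {}) \<and>
     (\<forall>e\<in>E2. halves e \<inter> E1 = {})"

definition has_gen_C4 :: "cell set \<Rightarrow> edge2 set \<Rightarrow> bool" where
  "has_gen_C4 E1 E2 \<longleftrightarrow>
     (\<exists>i j k l. i \<noteq> k \<and> j \<noteq> l \<and> (i,j) \<in> E1 \<and> (i,l) \<in> E1 \<and> (k,j) \<in> E1 \<and> (k,l) \<in> E1) \<or>
     (\<exists>((i,j),(k,l))\<in>E2. occupied E1 E2 (i,l) \<and> occupied E1 E2 (k,j)) \<or>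
     (\<exists>((i,j),(p,q))\<in>E2. \<exists>k l.
        distinct [(k,l),(k,j),(k,q),(i,l),(p,l)] \<and>
        (\<forall>c\<in>{(k,l),(k,j),(k,q),(i,l),(p,l)}. occupied E1 E2 c))"

definition z2 :: "nat \<Rightarrow> nat \<Rightarrow> nat" where
  "z2 m n = Max {card E1 + card E2 | E1 E2.
                  is_config m n E1 E2 \<and> simple_config E1 E2 \<and> \<not> has_gen_C4 E1 E2}"

end

theory Submission
  imports Defs
begin

abbreviation "W1 \<equiv> {(1::nat,1::nat),(2,1),(2,2),(3,3),(4,3),(3,2),(5,3)}"
abbreviation "W2 \<equiv> {((1::nat,3::nat),(4::nat,2::nat)),((3,1),(5,2))}"
abbreviation "OC \<equiv> {(1::nat,1::nat),(2,1),(2,2),(3,3),(4,3),(3,2),(5,3),(1,3),(4,2),(3,1),(5,2)}"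
lemma w_occ: "occupied W1 W2 c \<longleftrightarrow> c \<in> OC"
  unfolding occupied_def halves_def by auto
lemma row: "(i,j)\<in>W1 \<Longrightarrow> (i,l)\<in>W1 \<Longrightarrow> j<l \<Longrightarrow> (i=2\<and>j=1\<and>l=2) \<or> (i=3\<and>j=2\<and>l=3)"
  by (simp only: insert_iff empty_iff prod.inject) (elim disjE; simp)
lemma p1: "\<not>(\<exists>i j k l. i \<noteq> k \<and> j \<noteq> l \<and> (i,j) \<in> W1 \<and> (i,l) \<in> W1 \<and> (k,j) \<in> W1 \<and> (k,l) \<in> W1)"
proof (intro notI, elim exE conjE)
  fix i j k l assume h: "i \<noteq> k" "j \<noteq> l" "(i,j) \<in> W1" "(i,l) \<in> W1" "(k,j) \<in> W1" "(k,l) \<in> W1"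
  show False
  proof (cases "j < l")
    case True
    then show ?thesis using row[OF h(3,4) True] row[OF h(5,6) True] h(1) by auto
  next
    case False
    then have "l < j" using h(2) by simp
    then show ?thesis using row[OF h(4,3)] row[OF h(6,5)] h(1) by auto
  qed
qed
lemma p3a: "((i,j),(p,q)) \<in> W2 \<Longrightarrow> (k,l) \<in> OC \<Longrightarrow> \<not>(distinct [(k,l),(k,j),(k,q),(i,l),(p,l)] \<and>
        (k,j) \<in> OC \<and> (k,q) \<in> OC \<and> (i,l) \<in> OC \<and> (p,l) \<in> OC)"
  apply (simp only: insert_iff empty_iff prod.inject)
  apply (elim disjE conjE)
  apply simp_all
  done
lemma p3: "\<not>(\<exists>((i,j),(p,q))\<in>W2. \<exists>k l.
        distinct [(k,l),(k,j),(k,q),(i,l),(p,l)] \<and>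
        (\<forall>c\<in>{(k,l),(k,j),(k,q),(i,l),(p,l)}. occupied W1 W2 c))"
  unfolding w_occ Bex_def using p3a by fastforce

lemma p2: "\<not>(\<exists>((i,j),(k,l))\<in>W2. occupied W1 W2 (i,l) \<and> occupied W1 W2 (k,j))"
  unfolding w_occ by simp

lemma w_config: "is_config 5 3 W1 W2"
  unfolding is_config_def by auto

lemma w_simple: "simple_config W1 W2"
  unfolding simple_config_def halves_def by auto

lemma w_noC4: "\<not> has_gen_C4 W1 W2"
  unfolding has_gen_C4_def de_Morgan_disj by (intro conjI p1 p2 p3)

lemma fin: "finite {card E1 + card E2 | E1 E2.
                  is_config m n E1 E2 \<and> simple_config E1 E2 \<and> \<not> has_gen_C4 E1 E2}"
proof -
  let ?C = "{1..m} \<times> {1..n}"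
  have "{card E1 + card E2 | E1 E2.
                  is_config m n E1 E2 \<and> simple_config E1 E2 \<and> \<not> has_gen_C4 E1 E2}
        \<subseteq> {..card ?C + card (?C \<times> ?C)}"
  proof
    fix x assume "x \<in> {card E1 + card E2 | E1 E2.
                  is_config m n E1 E2 \<and> simple_config E1 E2 \<and> \<not> has_gen_C4 E1 E2}"
    then obtain E1 E2 where x: "x = card E1 + card E2" and c: "is_config m n E1 E2" by blast
    have s1: "E1 \<subseteq> ?C" using c unfolding is_config_def by blast
    have s2: "E2 \<subseteq> ?C \<times> ?C" using c unfolding is_config_def by fastforce
    have "card E1 \<le> card ?C" by (rule card_mono[OF _ s1]) simp
    moreover have "card E2 \<le> card (?C \<times> ?C)" by (rule card_mono[OF _ s2]) simp
    ultimately show "x \<in> {..card ?C + card (?C \<times> ?C)}" using x by simp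
  qed
  then show ?thesis using finite_subset by blast
qed

theorem theorem4p1:
  shows "z2 5 3 \<ge> 9"
proof -
  have "card W1 + card W2 \<in> {card E1 + card E2 | E1 E2.
                  is_config 5 3 E1 E2 \<and> simple_config E1 E2 \<and> \<not> has_gen_C4 E1 E2}"
    using w_config w_simple w_noC4 by blast
  then have "card W1 + card W2 \<le> z2 5 3" unfolding z2_def by (rule Max_ge[OF fin])
  then show ?thesis by simp
qed

end
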